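(* Let $k$ be an algebraically closed field. Then every quadratic algebra with one relation, $R=k\langle x_1,\dots,x_n\rangle/(f)$ with $f$ a nonzero homogeneous quadratic element, is initially Koszul (with respect to a suitable basis of $R_1$). In particular, every standard Artin–Schelter regular algebra of global dimension $2$ over $k$ is initially Koszul.
   Context: For a standard algebra $R$ (graded, $R_0=k$, generated by $R_1$) and a basis $x_1,\dots,x_n$ of $R_1$, let $I_k=x_1R+\dots+x_kR$ ($I_0=0$). $R$ is initially Koszul (with Groebner flag $(x_1,\dots,x_n)$) if for some such basis and each $1\le k\le n$ the right ideal $\{a\in R: x_ka\in I_{k-1}\}$ equals $I_j$ for some $j$ (equivalently, $\{I_0,\dots,I_n\}$ is a Koszul filtration: a family of right ideals generated in degree one, containing $0$ and $R_+$, such that each nonzero member $I$ equals $J+xR$ with $J\ne I$ in the family, $x\in R_1$, and $\{a: xa\in J\}$ in the family). *)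

theory Defs
  imports "HOL-Computational_Algebra.Polynomial"
begin

text \<open>Free associative algebra k<x_0,...,x_{n-1}>: an element is a coefficient
function on words (lists of letter indices) with finite support, all of whose
words use only letters < n.\<close>

type_synonym 'k ncpoly = "nat list \<Rightarrow> 'k"

definition free_alg :: "nat \<Rightarrow> ('k::zero) ncpoly set" where
  "free_alg n = {p. finite {w. p w \<noteq> 0} \<and> (\<forall>w. p w \<noteq> 0 \<longrightarrow> set w \<subseteq> {..<n})}"

definition ncmul :: "('k::semiring_0) ncpoly \<Rightarrow> 'k ncpoly \<Rightarrow> 'k ncpoly" where
  "ncmul p q = (\<lambda>w. \<Sum>i\<le>length w. p (take i w) * q (drop i w))"

definition ncadd :: "('k::plus) ncpoly \<Rightarrow> 'k ncpoly \<Rightarrow> 'k ncpoly" where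
  "ncadd p q = (\<lambda>w. p w + q w)"

definition homogeneous :: "nat \<Rightarrow> ('k::zero) ncpoly \<Rightarrow> bool" where
  "homogeneous d p \<longleftrightarrow> (\<forall>w. p w \<noteq> 0 \<longrightarrow> length w = d)"

definition two_sided_ideal :: "nat \<Rightarrow> ('k::comm_ring_1) ncpoly \<Rightarrow> 'k ncpoly set" where
  "two_sided_ideal n f = {p. \<exists>(m::nat) a b. (\<forall>j<m. a j \<in> free_alg n \<and> b j \<in> free_alg n) \<and>
      p = (\<lambda>w. \<Sum>j<m. ncmul (ncmul (a j) f) (b j) w)}"

text \<open>Preimage in the free algebra of the right ideal I_k = y_0 R + ... + y_{k-1} R
of R = k<x>/(f).\<close>
definition right_ideal_pre :: "nat \<Rightarrow> ('k::comm_ring_1) ncpoly \<Rightarrow> (nat \<Rightarrow> 'k ncpoly) \<Rightarrow> nat \<Rightarrow> 'k ncpoly set" where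
  "right_ideal_pre n f y k = {p. \<exists>g h. (\<forall>i<k. g i \<in> free_alg n) \<and> h \<in> two_sided_ideal n f \<and>
      p = ncadd (\<lambda>w. \<Sum>i<k. ncmul (y i) (g i) w) h}"

definition degree_one_basis :: "nat \<Rightarrow> (nat \<Rightarrow> ('k::field) ncpoly) \<Rightarrow> bool" where
  "degree_one_basis n y \<longleftrightarrow> (\<forall>i<n. y i \<in> free_alg n \<and> homogeneous 1 (y i)) \<and>
     (\<forall>c. (\<forall>w. (\<Sum>i<n. c i * y i w) = 0) \<longrightarrow> (\<forall>i<n. c i = 0))"

text \<open>R = k<x_0..x_{n-1}>/(f) is initially Koszul with Groebner flag (y_0,...,y_{n-1}):
for each k, {a in R. y_k a in I_k} = I_j for some j (0-based indices; I_k generated by y_0..y_{k-1}).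
Elements of R are represented by their preimages in the free algebra.\<close>
definition initially_koszul_wrt :: "nat \<Rightarrow> ('k::field) ncpoly \<Rightarrow> (nat \<Rightarrow> 'k ncpoly) \<Rightarrow> bool" where
  "initially_koszul_wrt n f y \<longleftrightarrow>
     (\<forall>k<n. \<exists>j\<le>n. {a \<in> free_alg n. ncmul (y k) a \<in> right_ideal_pre n f y k} = right_ideal_pre n f y j)"

definition initially_koszul :: "nat \<Rightarrow> ('k::field) ncpoly \<Rightarrow> bool" where
  "initially_koszul n f \<longleftrightarrow> (\<exists>y. degree_one_basis n y \<and> initially_koszul_wrt n f y)"

end

theory Submission
  imports Defs "Jordan_Normal_Form.Determinant"
begin


lemma tri_swap:
  fixes g :: "nat \<Rightarrow> nat \<Rightarrow> 'a::comm_monoid_add"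
  shows "(\<Sum>i\<le>L. \<Sum>j\<le>i. g i j) = (\<Sum>j\<le>L. \<Sum>k\<le>L - j. g (j + k) j)"
proof -
  have "(\<Sum>i\<le>L. \<Sum>j\<le>i. g i j) = (\<Sum>(j,k)\<in>{(j,k). j+k \<le> L}. g (j+k) j)"
    using sum.triangle_reindex_eq[of "\<lambda>j k. g (j+k) j" L] by simp
  also have "\<dots> = (\<Sum>j\<le>L. \<Sum>k\<le>L - j. g (j + k) j)"
    apply (simp add: sum.Sigma)
    apply (rule sum.cong)
    apply auto
    done
  finally show ?thesis .
qed

lemma ncmul_assoc:
  fixes p q r :: "('k::semiring_0) ncpoly"
  shows "ncmul (ncmul p q) r = ncmul p (ncmul q r)"
proof
  fix w :: "nat list"
  let ?L = "length w"
  have "ncmul (ncmul p q) r w = (\<Sum>i\<le>?L. \<Sum>j\<le>i. p (take j w) * q (take (i-j) (drop j w)) * r (drop i w))"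
    unfolding ncmul_def
    by (auto simp: sum_distrib_right min_def take_drop intro!: sum.cong)
  also have "\<dots> = (\<Sum>j\<le>?L. \<Sum>k\<le>?L - j. p (take j w) * q (take k (drop j w)) * r (drop (j+k) w))"
    by (subst tri_swap) simp
  also have "\<dots> = ncmul p (ncmul q r) w"
    unfolding ncmul_def
    by (auto simp: sum_distrib_left mult.assoc add.commute intro!: sum.cong)
  finally show "ncmul (ncmul p q) r w = ncmul p (ncmul q r) w" .
qed

definition one_p :: "('k::{zero,one}) ncpoly" where
  "one_p = (\<lambda>w. if w = [] then 1 else 0)"

lemma ncmul_one_left[simp]: "ncmul one_p p = (p::('k::semiring_1) ncpoly)"
proof
  fix w show "ncmul one_p p w = p w"
    unfolding ncmul_def one_p_def
    by (simp add: sum.atMost_shift)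
qed

lemma ncmul_one_right[simp]: "ncmul p one_p = (p::('k::semiring_1) ncpoly)"
proof
  fix w
  have "ncmul p one_p w = (\<Sum>i\<le>length w. if i = length w then p w else 0)"
    unfolding ncmul_def one_p_def by (intro sum.cong) auto
  also have "\<dots> = p w" by simp
  finally show "ncmul p one_p w = p w" .
qed

lemma ncmul_sum_left:
  "ncmul (\<lambda>w. \<Sum>j\<in>J. X j w) q = (\<lambda>w. \<Sum>j\<in>J. ncmul (X j) (q::('k::semiring_0) ncpoly) w)"
  unfolding ncmul_def by (auto simp: sum_distrib_right intro: sum.swap)

lemma ncmul_sum_right:
  "ncmul q (\<lambda>w. \<Sum>j\<in>J. X j w) = (\<lambda>w. \<Sum>j\<in>J. ncmul (q::('k::semiring_0) ncpoly) (X j) w)"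
  unfolding ncmul_def by (auto simp: sum_distrib_left intro: sum.swap)

lemma ncmul_add_left:
  "ncmul (\<lambda>w. p w + p' w) q = (\<lambda>w. ncmul p q w + ncmul p' (q::('k::semiring_0) ncpoly) w)"
  unfolding ncmul_def by (auto simp: distrib_right sum.distrib)

lemma ncmul_add_right:
  "ncmul q (\<lambda>w. p w + p' w) = (\<lambda>w. ncmul q p w + ncmul (q::('k::semiring_0) ncpoly) p' w)"
  unfolding ncmul_def by (auto simp: distrib_left sum.distrib)

lemma ncmul_smul_left:
  "ncmul (\<lambda>w. c * p w) q = (\<lambda>w. c * ncmul p (q::('k::comm_semiring_0) ncpoly) w)"
  unfolding ncmul_def by (auto simp: sum_distrib_left mult.assoc)

lemma ncmul_smul_right:
  "ncmul q (\<lambda>w. c * p w) = (\<lambda>w. c * ncmul (q::('k::comm_semiring_0) ncpoly) p w)"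
  unfolding ncmul_def by (auto simp: sum_distrib_left mult.assoc mult.left_commute)

lemma ncmul_zero_left[simp]: "ncmul (\<lambda>w. 0) q = (\<lambda>w. 0::'k::semiring_0)"
  unfolding ncmul_def by auto

lemma ncmul_zero_right[simp]: "ncmul q (\<lambda>w. 0) = (\<lambda>w. 0::'k::semiring_0)"
  unfolding ncmul_def by auto

lemma ncmul_neg_left:
  "ncmul (\<lambda>w. - p w) q = (\<lambda>w. - ncmul p (q::('k::ring) ncpoly) w)"
  unfolding ncmul_def by (auto simp: sum_negf)

lemma ncmul_neg_right:
  "ncmul q (\<lambda>w. - p w) = (\<lambda>w. - ncmul (q::('k::ring) ncpoly) p w)"
  unfolding ncmul_def by (auto simp: sum_negf)

lemma ncmul_diff_left:
  "ncmul (\<lambda>w. p w - p' w) q = (\<lambda>w. ncmul p q w - ncmul p' (q::('k::ring) ncpoly) w)"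
  unfolding ncmul_def by (auto simp: left_diff_distrib sum_subtractf)

lemma ncmul_diff_right:
  "ncmul q (\<lambda>w. p w - p' w) = (\<lambda>w. ncmul q p w - ncmul (q::('k::ring) ncpoly) p' w)"
  unfolding ncmul_def by (auto simp: right_diff_distrib sum_subtractf)

lemma free_algI:
  assumes "finite {w. p w \<noteq> 0}" "\<And>w. p w \<noteq> 0 \<Longrightarrow> set w \<subseteq> {..<n}"
  shows "p \<in> free_alg n"
  using assms unfolding free_alg_def by auto

lemma free_alg_fin: "p \<in> free_alg n \<Longrightarrow> finite {w. p w \<noteq> 0}"
  unfolding free_alg_def by auto

lemma free_alg_set: "p \<in> free_alg n \<Longrightarrow> p w \<noteq> 0 \<Longrightarrow> set w \<subseteq> {..<n}"
  unfolding free_alg_def by auto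

lemma free_alg_zero[simp]: "(\<lambda>w. 0) \<in> free_alg n"
  by (rule free_algI) auto

lemma free_alg_one[simp]: "(one_p::'k::zero_neq_one ncpoly) \<in> free_alg n"
  by (rule free_algI) (auto simp: one_p_def split: if_splits)

lemma free_alg_add:
  fixes p q :: "('k::monoid_add) ncpoly"
  assumes "p \<in> free_alg n" "q \<in> free_alg n"
  shows "(\<lambda>w. p w + q w) \<in> free_alg n"
proof (rule free_algI)
  have sub: "{w. p w + q w \<noteq> 0} \<subseteq> {w. p w \<noteq> 0} \<union> {w. q w \<noteq> 0}" by auto
  show "finite {w. p w + q w \<noteq> 0}"
    by (rule finite_subset[OF sub]) (intro finite_UnI free_alg_fin[OF assms(1)] free_alg_fin[OF assms(2)])
  fix w assume "p w + q w \<noteq> 0"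
  then have "p w \<noteq> 0 \<or> q w \<noteq> 0" by auto
  then show "set w \<subseteq> {..<n}" using assms free_alg_set by blast
qed

lemma free_alg_smul:
  fixes p :: "('k::semiring_0) ncpoly"
  assumes "p \<in> free_alg n"
  shows "(\<lambda>w. c * p w) \<in> free_alg n"
proof (rule free_algI)
  have sub: "{w. c * p w \<noteq> 0} \<subseteq> {w. p w \<noteq> 0}" by auto
  show "finite {w. c * p w \<noteq> 0}"
    by (rule finite_subset[OF sub]) (intro free_alg_fin[OF assms])
  fix w assume "c * p w \<noteq> 0"
  then show "set w \<subseteq> {..<n}" using assms free_alg_set by force
qed

lemma free_alg_neg:
  fixes p :: "('k::ring_1) ncpoly"
  assumes "p \<in> free_alg n"
  shows "(\<lambda>w. - p w) \<in> free_alg n"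
  using free_alg_smul[OF assms, of "-1"] by simp

lemma free_alg_diff:
  fixes p q :: "('k::ring_1) ncpoly"
  assumes "p \<in> free_alg n" "q \<in> free_alg n"
  shows "(\<lambda>w. p w - q w) \<in> free_alg n"
  using free_alg_add[OF assms(1) free_alg_neg[OF assms(2)]] by simp

lemma free_alg_sum:
  fixes X :: "'j \<Rightarrow> ('k::comm_monoid_add) ncpoly"
  assumes "finite J" "\<And>j. j \<in> J \<Longrightarrow> X j \<in> free_alg n"
  shows "(\<lambda>w. \<Sum>j\<in>J. X j w) \<in> free_alg n"
  using assms
proof (induction J rule: finite_induct)
  case empty then show ?case by simp
next
  case (insert x F)
  then show ?case using free_alg_add[of "X x" n "\<lambda>w. \<Sum>j\<in>F. X j w"] by simp
qed

lemma free_alg_ncmul: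
  fixes p q :: "('k::semiring_0) ncpoly"
  assumes "p \<in> free_alg n" "q \<in> free_alg n"
  shows "ncmul p q \<in> free_alg n"
proof (rule free_algI)
  have sub: "{w. ncmul p q w \<noteq> 0} \<subseteq> (\<lambda>(u,v). u @ v) ` ({w. p w \<noteq> 0} \<times> {w. q w \<noteq> 0})"
  proof
    fix w assume "w \<in> {w. ncmul p q w \<noteq> 0}"
    then obtain i where "p (take i w) * q (drop i w) \<noteq> 0"
      unfolding ncmul_def by (auto elim: sum.not_neutral_contains_not_neutral)
    then show "w \<in> (\<lambda>(u,v). u @ v) ` ({w. p w \<noteq> 0} \<times> {w. q w \<noteq> 0})"
      by (intro image_eqI[of _ _ "(take i w, drop i w)"]) auto
  qed
  show "finite {w. ncmul p q w \<noteq> 0}"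
    by (rule finite_subset[OF sub]) (intro finite_imageI finite_cartesian_product free_alg_fin[OF assms(1)] free_alg_fin[OF assms(2)])
  fix w assume "ncmul p q w \<noteq> 0"
  then obtain i where "p (take i w) * q (drop i w) \<noteq> 0"
    unfolding ncmul_def by (auto elim: sum.not_neutral_contains_not_neutral)
  then have "set (take i w) \<subseteq> {..<n}" "set (drop i w) \<subseteq> {..<n}"
    using assms free_alg_set by (metis mult_zero_left mult_zero_right)+
  then show "set w \<subseteq> {..<n}"
    by (metis append_take_drop_id le_sup_iff set_append)
qed

lemma sum_lessThan_add:
  "(\<Sum>j<m1+m2. g j) = (\<Sum>j<m1. g j) + (\<Sum>j<(m2::nat). g (m1+j)::'a::comm_monoid_add)"
  by (induction m2) (auto simp: add.assoc)

subsection \<open>The two-sided ideal\<close>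

lemma idealI:
  fixes m :: nat
  assumes "\<forall>j<m. a j \<in> free_alg n \<and> b j \<in> free_alg n"
  shows "(\<lambda>w. \<Sum>j<m. ncmul (ncmul (a j) f) (b j) w) \<in> two_sided_ideal n f"
  using assms unfolding two_sided_ideal_def by blast

lemma idealE:
  assumes "p \<in> two_sided_ideal n f"
  obtains m :: nat and a b where "\<forall>j<m. a j \<in> free_alg n \<and> b j \<in> free_alg n"
    "p = (\<lambda>w. \<Sum>j<m. ncmul (ncmul (a j) f) (b j) w)"
  using assms unfolding two_sided_ideal_def by blast

context
  fixes n :: nat and f :: "('k::field) ncpoly"
begin

lemma ideal_zero[simp]: "(\<lambda>w. 0) \<in> two_sided_ideal n f"
  using idealI[of 0] by simp

lemma ideal_add:
  assumes "p \<in> two_sided_ideal n f" "q \<in> two_sided_ideal n f"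
  shows "(\<lambda>w. p w + q w) \<in> two_sided_ideal n f"
proof -
  obtain m1 :: nat and a1 b1 where 1: "\<forall>j<m1. a1 j \<in> free_alg n \<and> b1 j \<in> free_alg n"
    "p = (\<lambda>w. \<Sum>j<m1. ncmul (ncmul (a1 j) f) (b1 j) w)" using assms(1) by (rule idealE)
  obtain m2 :: nat and a2 b2 where 2: "\<forall>j<m2. a2 j \<in> free_alg n \<and> b2 j \<in> free_alg n"
    "q = (\<lambda>w. \<Sum>j<m2. ncmul (ncmul (a2 j) f) (b2 j) w)" using assms(2) by (rule idealE)
  define a where "a j = (if j < m1 then a1 j else a2 (j - m1))" for j
  define b where "b j = (if j < m1 then b1 j else b2 (j - m1))" for j
  have "\<forall>j<m1+m2. a j \<in> free_alg n \<and> b j \<in> free_alg n"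
    using 1 2 by (auto simp: a_def b_def)
  then have "(\<lambda>w. \<Sum>j<m1+m2. ncmul (ncmul (a j) f) (b j) w) \<in> two_sided_ideal n f"
    by (rule idealI)
  also have "(\<lambda>w. \<Sum>j<m1+m2. ncmul (ncmul (a j) f) (b j) w) = (\<lambda>w. p w + q w)"
    unfolding sum_lessThan_add 1 2 by (auto simp: a_def b_def)
  finally show ?thesis .
qed

lemma ideal_smul:
  assumes "p \<in> two_sided_ideal n f"
  shows "(\<lambda>w. c * p w) \<in> two_sided_ideal n f"
proof -
  obtain m :: nat and a b where 1: "\<forall>j<m. a j \<in> free_alg n \<and> b j \<in> free_alg n"
    "p = (\<lambda>w. \<Sum>j<m. ncmul (ncmul (a j) f) (b j) w)" using assms(1) by (rule idealE)
  have "\<forall>j<m. (\<lambda>w. c * a j w) \<in> free_alg n \<and> b j \<in> free_alg n"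
    using 1 by (auto intro: free_alg_smul)
  then have "(\<lambda>w. \<Sum>j<m. ncmul (ncmul (\<lambda>w. c * a j w) f) (b j) w) \<in> two_sided_ideal n f"
    by (rule idealI)
  also have "(\<lambda>w. \<Sum>j<m. ncmul (ncmul (\<lambda>w. c * a j w) f) (b j) w) = (\<lambda>w. c * p w)"
    unfolding 1 ncmul_smul_left by (simp add: sum_distrib_left)
  finally show ?thesis .
qed

lemma ideal_neg:
  assumes "p \<in> two_sided_ideal n f"
  shows "(\<lambda>w. - p w) \<in> two_sided_ideal n f"
  using ideal_smul[OF assms, of "-1"] by simp

lemma ideal_diff:
  assumes "p \<in> two_sided_ideal n f" "q \<in> two_sided_ideal n f"
  shows "(\<lambda>w. p w - q w) \<in> two_sided_ideal n f"
  using ideal_add[OF assms(1) ideal_neg[OF assms(2)]] by simp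

lemma ideal_sum:
  assumes "finite J" "\<And>j. j \<in> J \<Longrightarrow> X j \<in> two_sided_ideal n f"
  shows "(\<lambda>w. \<Sum>j\<in>J. X j w) \<in> two_sided_ideal n f"
  using assms
proof (induction J rule: finite_induct)
  case empty then show ?case by simp
next
  case (insert x F)
  then show ?case using ideal_add[of "X x" "\<lambda>w. \<Sum>j\<in>F. X j w"] by simp
qed

lemma ideal_lmul:
  assumes "g \<in> free_alg n" "p \<in> two_sided_ideal n f"
  shows "ncmul g p \<in> two_sided_ideal n f"
proof -
  obtain m :: nat and a b where 1: "\<forall>j<m. a j \<in> free_alg n \<and> b j \<in> free_alg n"
    "p = (\<lambda>w. \<Sum>j<m. ncmul (ncmul (a j) f) (b j) w)" using assms(2) by (rule idealE)
  have "\<forall>j<m. ncmul g (a j) \<in> free_alg n \<and> b j \<in> free_alg n"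
    using 1 assms(1) by (auto intro: free_alg_ncmul)
  then have "(\<lambda>w. \<Sum>j<m. ncmul (ncmul (ncmul g (a j)) f) (b j) w) \<in> two_sided_ideal n f"
    by (rule idealI)
  also have "(\<lambda>w. \<Sum>j<m. ncmul (ncmul (ncmul g (a j)) f) (b j) w) = ncmul g p"
    unfolding 1 ncmul_sum_right by (simp add: ncmul_assoc)
  finally show ?thesis .
qed

lemma ideal_rmul:
  assumes "g \<in> free_alg n" "p \<in> two_sided_ideal n f"
  shows "ncmul p g \<in> two_sided_ideal n f"
proof -
  obtain m :: nat and a b where 1: "\<forall>j<m. a j \<in> free_alg n \<and> b j \<in> free_alg n"
    "p = (\<lambda>w. \<Sum>j<m. ncmul (ncmul (a j) f) (b j) w)" using assms(2) by (rule idealE)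
  have "\<forall>j<m. a j \<in> free_alg n \<and> ncmul (b j) g \<in> free_alg n"
    using 1 assms(1) by (auto intro: free_alg_ncmul)
  then have "(\<lambda>w. \<Sum>j<m. ncmul (ncmul (a j) f) (ncmul (b j) g) w) \<in> two_sided_ideal n f"
    by (rule idealI)
  also have "(\<lambda>w. \<Sum>j<m. ncmul (ncmul (a j) f) (ncmul (b j) g) w) = ncmul p g"
    unfolding 1 ncmul_sum_left by (simp add: ncmul_assoc)
  finally show ?thesis .
qed

lemma ideal_gen:
  "f \<in> two_sided_ideal n f"
proof -
  have "(\<lambda>w. \<Sum>j<(1::nat). ncmul (ncmul one_p f) one_p w) \<in> two_sided_ideal n f"
    by (rule idealI) simp
  then show ?thesis by (simp add: card_lessThan)
qed

lemma ideal_sub_free: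
  assumes "f \<in> free_alg n" "p \<in> two_sided_ideal n f"
  shows "p \<in> free_alg n"
proof -
  obtain m :: nat and a b where 1: "\<forall>j<m. a j \<in> free_alg n \<and> b j \<in> free_alg n"
    "p = (\<lambda>w. \<Sum>j<m. ncmul (ncmul (a j) f) (b j) w)" using assms(2) by (rule idealE)
  show ?thesis unfolding 1(2)
    by (rule free_alg_sum) (use 1(1) assms(1) in \<open>auto intro!: free_alg_ncmul\<close>)
qed

end

subsection \<open>Coordinates and left derivatives\<close>

definition yvec :: "nat \<Rightarrow> (nat \<Rightarrow> nat \<Rightarrow> 'k::zero) \<Rightarrow> nat \<Rightarrow> 'k ncpoly" where
  "yvec n Y k = (\<lambda>w. case w of [a] \<Rightarrow> if a < n then Y a k else 0 | _ \<Rightarrow> 0)"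

definition dd :: "nat \<Rightarrow> (nat \<Rightarrow> nat \<Rightarrow> 'k::comm_ring_1) \<Rightarrow> nat \<Rightarrow> 'k ncpoly \<Rightarrow> 'k ncpoly" where
  "dd n D j p = (\<lambda>w. \<Sum>i<n. D j i * p (i # w))"

lemma ncmul_Nil: "ncmul p q [] = p [] * (q [] :: 'k::semiring_0)"
  unfolding ncmul_def by simp

lemma ncmul_Cons: "ncmul p q (i # w) = p [] * q (i # w) + (\<Sum>s\<le>length w. p (i # take s w) * (q (drop s w) :: 'k::semiring_0))"
  unfolding ncmul_def length_Cons sum.atMost_Suc_shift by simp

lemma yvec_nz: "yvec n Y k w \<noteq> 0 \<Longrightarrow> \<exists>a<n. w = [a]"
  unfolding yvec_def by (cases w; cases "tl w") (auto split: if_splits)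

lemma yvec_free: "yvec n Y k \<in> free_alg n"
proof (rule free_algI)
  have sub: "{w. yvec n Y k w \<noteq> 0} \<subseteq> (\<lambda>a. [a]) ` {..<n}"
    using yvec_nz by fastforce
  show "finite {w. yvec n Y k w \<noteq> 0}" by (rule finite_subset[OF sub]) auto
  fix w assume "yvec n Y k w \<noteq> 0"
  then show "set w \<subseteq> {..<n}" using yvec_nz by fastforce
qed

lemma yvec_hom: "homogeneous 1 (yvec n Y k)"
  unfolding homogeneous_def yvec_def by (auto split: list.splits)

lemma ncmul_yvec_Nil: "ncmul (yvec n Y k) q [] = (0::'k::semiring_0)"
  by (simp add: ncmul_Nil yvec_def)

lemma ncmul_yvec_Cons:
  "ncmul (yvec n Y k) q (a # w) = (if a < n then Y a k else 0) * (q w :: 'k::semiring_0)"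
proof -
  have "ncmul (yvec n Y k) q (a # w) = yvec n Y k [] * q (a # w) + (\<Sum>s\<le>length w. yvec n Y k (a # take s w) * q (drop s w))"
    unfolding ncmul_Cons ..
  also have "\<dots> = (\<Sum>s\<le>length w. if s = 0 then (if a < n then Y a k else 0) * q w else 0)"
  proof -
    have "yvec n Y k [] = 0" by (simp add: yvec_def)
    moreover have "(\<Sum>s\<le>length w. yvec n Y k (a # take s w) * q (drop s w)) = (\<Sum>s\<le>length w. if s = 0 then (if a < n then Y a k else 0) * q w else 0)"
    proof (intro sum.cong refl)
      fix s assume "s \<in> {..length w}"
      then show "yvec n Y k (a # take s w) * q (drop s w) = (if s = 0 then (if a < n then Y a k else 0) * q w else 0)"
        by (cases w; cases s) (auto simp: yvec_def)
    qed
    ultimately show ?thesis by simp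
  qed
  also have "\<dots> = (if a < n then Y a k else 0) * q w" by simp
  finally show ?thesis .
qed

context fixes n :: nat and D :: "nat \<Rightarrow> nat \<Rightarrow> 'k::field"
begin

lemma dd_add: "dd n D j (\<lambda>w. p w + q w) = (\<lambda>w. dd n D j p w + dd n D j q w)"
  unfolding dd_def by (simp add: distrib_left sum.distrib)

lemma dd_diff: "dd n D j (\<lambda>w. p w - q w) = (\<lambda>w. dd n D j p w - dd n D j q w)"
  unfolding dd_def by (simp add: right_diff_distrib sum_subtractf)

lemma dd_smul: "dd n D j (\<lambda>w. c * p w) = (\<lambda>w. c * dd n D j p w)"
  unfolding dd_def by (simp add: sum_distrib_left mult.left_commute)

lemma dd_sum: "dd n D j (\<lambda>w. \<Sum>t\<in>T. X t w) = (\<lambda>w. \<Sum>t\<in>T. dd n D j (X t) w)"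
  unfolding dd_def by (simp add: sum_distrib_left sum.swap[of _ T])

lemma dd_free:
  assumes "p \<in> free_alg n"
  shows "dd n D j p \<in> free_alg n"
proof (rule free_algI)
  have sub: "{w. dd n D j p w \<noteq> 0} \<subseteq> tl ` {w. p w \<noteq> 0}"
  proof
    fix w assume "w \<in> {w. dd n D j p w \<noteq> 0}"
    then obtain i where "D j i * p (i # w) \<noteq> 0"
      unfolding dd_def by (auto elim: sum.not_neutral_contains_not_neutral)
    then show "w \<in> tl ` {w. p w \<noteq> 0}" by (intro image_eqI[of _ _ "i # w"]) auto
  qed
  show "finite {w. dd n D j p w \<noteq> 0}"
    by (rule finite_subset[OF sub]) (intro finite_imageI free_alg_fin[OF assms])
  fix w assume "dd n D j p w \<noteq> 0"
  then obtain i where "D j i * p (i # w) \<noteq> 0"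
    unfolding dd_def by (auto elim: sum.not_neutral_contains_not_neutral)
  then have "set (i # w) \<subseteq> {..<n}" using free_alg_set[OF assms, of "i # w"] by auto
  then show "set w \<subseteq> {..<n}" by auto
qed

lemma dd_ncmul:
  "dd n D j (ncmul p q) = (\<lambda>w. ncmul (dd n D j p) q w + p [] * dd n D j q w)"
proof
  fix w
  have "dd n D j (ncmul p q) w = (\<Sum>i<n. D j i * (p [] * q (i # w) + (\<Sum>s\<le>length w. p (i # take s w) * q (drop s w))))"
    unfolding dd_def ncmul_Cons ..
  also have "\<dots> = p [] * dd n D j q w + (\<Sum>s\<le>length w. (\<Sum>i<n. D j i * p (i # take s w)) * q (drop s w))"
    unfolding dd_def
    by (simp add: distrib_left sum.distrib sum_distrib_left sum_distrib_right mult.assoc mult.left_commute sum.swap[of _ "{..<n}"])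
  also have "\<dots> = ncmul (dd n D j p) q w + p [] * dd n D j q w"
    unfolding ncmul_def dd_def by simp
  finally show "dd n D j (ncmul p q) w = ncmul (dd n D j p) q w + p [] * dd n D j q w" .
qed

lemma dd_yvec:
  "dd n D j (ncmul (yvec n Y k) q) = (\<lambda>w. (\<Sum>i<n. D j i * Y i k) * q w)"
  unfolding dd_def ncmul_yvec_Cons by (simp add: sum_distrib_right mult.assoc)

lemma ideal_dd:
  fixes f :: "'k ncpoly"
  assumes "f \<in> free_alg n" "f [] = 0" "h \<in> two_sided_ideal n f"
  shows "\<exists>c\<in>free_alg n. \<forall>j. (\<lambda>w. dd n D j h w - ncmul (dd n D j f) c w) \<in> two_sided_ideal n f"
proof -
  obtain m :: nat and a b where 1: "\<forall>t<m. a t \<in> free_alg n \<and> b t \<in> free_alg n"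
    "h = (\<lambda>w. \<Sum>t<m. ncmul (ncmul (a t) f) (b t) w)" using assms(3) by (rule idealE)
  define c where "c = (\<lambda>w. \<Sum>t<m. a t [] * b t w)"
  have cA: "c \<in> free_alg n" unfolding c_def
    by (rule free_alg_sum) (use 1 in \<open>auto intro: free_alg_smul\<close>)
  have "(\<lambda>w. dd n D j h w - ncmul (dd n D j f) c w) \<in> two_sided_ideal n f" for j
  proof -
    have "(\<lambda>w. dd n D j h w - ncmul (dd n D j f) c w)
       = (\<lambda>w. \<Sum>t<m. ncmul (ncmul (dd n D j (a t)) f) (b t) w)"
      unfolding 1 dd_sum c_def dd_ncmul ncmul_sum_right ncmul_smul_right
      by (simp add: ncmul_Nil assms(2) ncmul_add_left ncmul_smul_left sum.distrib)
    also have "\<dots> \<in> two_sided_ideal n f"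
      by (rule idealI) (use 1 in \<open>auto intro: dd_free\<close>)
    finally show ?thesis .
  qed
  then show ?thesis using cA by blast
qed

end


subsection \<open>Graded components\<close>

definition proj :: "nat \<Rightarrow> ('k::zero) ncpoly \<Rightarrow> 'k ncpoly" where
  "proj d p = (\<lambda>w. if length w = d then p w else 0)"

lemma proj_add: "proj d (\<lambda>w. p w + q w) = (\<lambda>w. proj d p w + proj d q w :: 'k::monoid_add)"
  unfolding proj_def by auto

lemma proj_diff: "proj d (\<lambda>w. p w - q w) = (\<lambda>w. proj d p w - proj d q w :: 'k::group_add)"
  unfolding proj_def by auto

lemma proj_sum: "proj d (\<lambda>w. \<Sum>t\<in>T. X t w) = (\<lambda>w. \<Sum>t\<in>T. proj d (X t) w :: 'k::comm_monoid_add)"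
  unfolding proj_def by auto

lemma proj_free:
  fixes p :: "('k::zero) ncpoly"
  assumes "p \<in> free_alg n" shows "proj d p \<in> free_alg n"
proof (rule free_algI)
  have sub: "{w. proj d p w \<noteq> 0} \<subseteq> {w. p w \<noteq> 0}" by (auto simp: proj_def)
  show "finite {w. proj d p w \<noteq> 0}" by (rule finite_subset[OF sub]) (intro free_alg_fin[OF assms])
  fix w assume "proj d p w \<noteq> 0"
  then show "set w \<subseteq> {..<n}" using free_alg_set[OF assms, of w] by (auto simp: proj_def split: if_splits)
qed

lemma proj_hom: "homogeneous d p \<Longrightarrow> proj e p = (if e = d then p else (\<lambda>w. 0))"
  unfolding proj_def homogeneous_def by (auto intro!: ext)

lemma hom1_Nil: "homogeneous 1 l \<Longrightarrow> l [] = 0"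
  unfolding homogeneous_def by force

lemma ncmul_hom1_Nil: "homogeneous 1 l \<Longrightarrow> ncmul l c [] = (0::'k::semiring_0)"
  by (simp add: ncmul_Nil hom1_Nil)

lemma ncmul_hom1_Cons: "homogeneous 1 l \<Longrightarrow> ncmul l c (a # w) = l [a] * (c w :: 'k::semiring_0)"
proof -
  assume h: "homogeneous 1 l"
  have "ncmul l c (a # w) = l [] * c (a # w) + (\<Sum>s\<le>length w. l (a # take s w) * c (drop s w))"
    unfolding ncmul_Cons ..
  also have "\<dots> = (\<Sum>s\<le>length w. if s = 0 then l [a] * c w else 0)"
  proof -
    have "l [] = 0" using h unfolding homogeneous_def by force
    moreover have "(\<Sum>s\<le>length w. l (a # take s w) * c (drop s w)) = (\<Sum>s\<le>length w. if s = 0 then l [a] * c w else 0)"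
    proof (intro sum.cong refl)
      fix s assume "s \<in> {..length w}"
      then have "s \<noteq> 0 \<Longrightarrow> length (a # take s w) \<noteq> 1" by (cases w) auto
      then have "s \<noteq> 0 \<Longrightarrow> l (a # take s w) = 0" using h unfolding homogeneous_def by blast
      then show "l (a # take s w) * c (drop s w) = (if s = 0 then l [a] * c w else 0)"
        using h unfolding homogeneous_def by (cases "s = 0") auto
    qed
    ultimately show ?thesis by simp
  qed
  also have "\<dots> = l [a] * c w" by simp
  finally show ?thesis .
qed

lemma proj_hom1_mul:
  assumes "homogeneous 1 l"
  shows "proj d (ncmul l c) = (if d = 0 then (\<lambda>w. 0) else ncmul l (proj (d - 1) c :: ('k::semiring_0) ncpoly))"
proof (rule ext)
  fix w show "proj d (ncmul l c) w = (if d = 0 then (\<lambda>w. 0) else ncmul l (proj (d - 1) c)) w"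
    by (cases w) (auto simp: proj_def ncmul_hom1_Nil[OF assms] ncmul_hom1_Cons[OF assms])
qed

lemma proj_ncmul:
  "proj d (ncmul p q) = (\<lambda>w. \<Sum>i\<le>d. ncmul (proj i p) (proj (d - i) q) w :: 'k::semiring_0)"
proof (rule ext)
  fix w
  have "(\<Sum>i\<le>d. ncmul (proj i p) (proj (d - i) q) w)
      = (\<Sum>i\<le>d. \<Sum>s\<le>length w. if s = i \<and> length w = d then p (take s w) * q (drop s w) else 0)"
    unfolding ncmul_def proj_def by (intro sum.cong refl) auto
  also have "\<dots> = (\<Sum>s\<le>length w. \<Sum>i\<le>d. if s = i \<and> length w = d then p (take s w) * q (drop s w) else 0)"
    by (rule sum.swap)
  also have "\<dots> = (\<Sum>s\<le>length w. if length w = d then p (take s w) * q (drop s w) else 0)"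
    by (intro sum.cong refl) auto
  also have "\<dots> = proj d (ncmul p q) w"
    unfolding proj_def ncmul_def by auto
  finally show "proj d (ncmul p q) w = (\<Sum>i\<le>d. ncmul (proj i p) (proj (d - i) q) w)" ..
qed

lemma free_alg_bound:
  assumes "p \<in> free_alg n"
  obtains N where "\<And>w. p w \<noteq> 0 \<Longrightarrow> length w \<le> N"
proof -
  have "finite (length ` {w. p w \<noteq> 0})" using free_alg_fin[OF assms] by simp
  then obtain N where "\<forall>x\<in>length ` {w. p w \<noteq> 0}. x \<le> N"
    using finite_nat_set_iff_bounded_le by blast
  then show ?thesis using that by auto
qed

lemma proj_decomp:
  assumes "\<And>w. p w \<noteq> 0 \<Longrightarrow> length w \<le> N"
  shows "p = (\<lambda>w. \<Sum>d\<le>N. proj d p w :: 'k::comm_monoid_add)"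
proof (rule ext)
  fix w
  show "p w = (\<Sum>d\<le>N. proj d p w)"
  proof (cases "length w \<le> N")
    case True
    then have "(\<Sum>d\<le>N. proj d p w) = (\<Sum>d\<le>N. if d = length w then p w else 0)"
      unfolding proj_def by (intro sum.cong) auto
    also have "\<dots> = p w" using True by simp
    finally show ?thesis ..
  next
    case False
    then show ?thesis using assms[of w] by (auto simp: proj_def)
  qed
qed

context
  fixes n :: nat and f :: "('k::field) ncpoly"
  assumes fA: "f \<in> free_alg n" and fh: "homogeneous 2 f"
begin

lemma ideal_proj:
  assumes "h \<in> two_sided_ideal n f"
  shows "proj d h \<in> two_sided_ideal n f"
proof -
  obtain m :: nat and a b where 1: "\<forall>t<m. a t \<in> free_alg n \<and> b t \<in> free_alg n"
    "h = (\<lambda>w. \<Sum>t<m. ncmul (ncmul (a t) f) (b t) w)" using assms by (rule idealE)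
  have projf: "proj e f \<in> two_sided_ideal n f" for e
    using proj_hom[OF fh, of e] ideal_gen by auto
  have key: "ncmul (ncmul a' g) b' \<in> two_sided_ideal n f"
    if "a' \<in> free_alg n" "b' \<in> free_alg n" "g \<in> two_sided_ideal n f" for a' b' g
    by (intro ideal_rmul ideal_lmul that)
  show ?thesis
    unfolding 1 proj_sum proj_ncmul ncmul_sum_left
    by (intro ideal_sum finite_lessThan finite_atMost key proj_free projf) (use 1 in auto)
qed

lemma ideal_of_projs:
  assumes "h \<in> free_alg n" "\<And>d. proj d h \<in> two_sided_ideal n f"
  shows "h \<in> two_sided_ideal n f"
proof -
  obtain N where "\<And>w. h w \<noteq> 0 \<Longrightarrow> length w \<le> N" using free_alg_bound[OF assms(1)] by blast
  then have "h = (\<lambda>w. \<Sum>d\<le>N. proj d h w)" by (rule proj_decomp)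
  also have "\<dots> \<in> two_sided_ideal n f" by (intro ideal_sum assms(2)) auto
  finally show ?thesis .
qed

end


lemma dd_hom:
  assumes "homogeneous (Suc d) p"
  shows "homogeneous d (dd n D j p)"
  unfolding homogeneous_def dd_def
proof (intro allI impI)
  fix w assume "(\<Sum>i<n. D j i * p (i # w)) \<noteq> 0"
  then obtain i where "D j i * p (i # w) \<noteq> 0" by (auto elim: sum.not_neutral_contains_not_neutral)
  then show "length w = d" using assms unfolding homogeneous_def by (metis length_Cons mult_zero_right nat.inject)
qed

lemma hom2_Nil: "homogeneous 2 f \<Longrightarrow> f [] = 0"
  unfolding homogeneous_def by force

lemma rip_memI:
  assumes "\<forall>i<k. g i \<in> free_alg n" "h \<in> two_sided_ideal n f"
    "p = (\<lambda>w. (\<Sum>i<k. ncmul (y i) (g i) w) + h w)"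
  shows "p \<in> right_ideal_pre n f y k"
  using assms unfolding right_ideal_pre_def ncadd_def by blast

lemma rip_memE:
  assumes "p \<in> right_ideal_pre n f y k"
  obtains g h where "\<forall>i<k. g i \<in> free_alg n" "h \<in> two_sided_ideal n f"
    "p = (\<lambda>w. (\<Sum>i<k. ncmul (y i) (g i) w) + h w)"
  using assms unfolding right_ideal_pre_def ncadd_def by blast

lemma rip0: "right_ideal_pre n f y 0 = two_sided_ideal n f"
  unfolding right_ideal_pre_def ncadd_def by auto

context
  fixes n :: nat and f :: "('k::field) ncpoly" and Y D :: "nat \<Rightarrow> nat \<Rightarrow> 'k"
  assumes fA: "f \<in> free_alg n" and fh: "homogeneous 2 f"
    and DY: "\<forall>j<n. \<forall>k<n. (\<Sum>i<n. D j i * Y i k) = (if j = k then 1 else 0)"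
begin

abbreviation "yy \<equiv> yvec n Y"
abbreviation "ll j \<equiv> dd n D j f"
abbreviation "FF \<equiv> two_sided_ideal n f"

lemma ll_free: "ll j \<in> free_alg n" using dd_free[OF fA] .

lemma ll_hom: "homogeneous 1 (ll j)" using dd_hom[of 1 f] fh by (simp add: numeral_2_eq_2)

lemma dd_y: "j < n \<Longrightarrow> k < n \<Longrightarrow> dd n D j (ncmul (yy k) q) = (if j = k then q else (\<lambda>w. 0))"
  using DY unfolding dd_yvec by auto

lemma dd_ysum:
  assumes "j < n" "k \<le> n"
  shows "dd n D j (\<lambda>w. \<Sum>i<k. ncmul (yy i) (g i) w) = (if j < k then g j else (\<lambda>w. 0))"
proof -
  have "dd n D j (\<lambda>w. \<Sum>i<k. ncmul (yy i) (g i) w) = (\<lambda>w. \<Sum>i<k. if j = i then g i w else 0)"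
    unfolding dd_sum using assms by (intro ext sum.cong refl) (auto simp: dd_y)
  also have "\<dots> = (if j < k then g j else (\<lambda>w. 0))" by (auto intro!: ext)
  finally show ?thesis .
qed

lemma ideal_dd': "h \<in> FF \<Longrightarrow> \<exists>c\<in>free_alg n. \<forall>j. (\<lambda>w. dd n D j h w - ncmul (ll j) c w) \<in> FF"
  using ideal_dd[OF fA hom2_Nil[OF fh]] by blast

lemma regular:
  assumes m: "m < n" "m \<noteq> 0" "ll m = yy 0"
  shows "b \<in> free_alg n \<Longrightarrow> ncmul (yy 0) b \<in> FF \<Longrightarrow> b \<in> FF"
proof -
  have "\<forall>b. b \<in> free_alg n \<longrightarrow> ncmul (yy 0) b \<in> FF \<longrightarrow> proj d b \<in> FF" for d
  proof (induction d)
    case 0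
    show ?case
    proof (intro allI impI)
      fix b assume b: "b \<in> free_alg n" "ncmul (yy 0) b \<in> FF"
      obtain c where c: "c \<in> free_alg n" "\<forall>j. (\<lambda>w. dd n D j (ncmul (yy 0) b) w - ncmul (ll j) c w) \<in> FF"
        using ideal_dd'[OF b(2)] by blast
      have "(\<lambda>w. b w - ncmul (ll 0) c w) \<in> FF" using c(2)[rule_format, of 0] m(1) dd_y[of 0 0 b] by simp
      then have "proj 0 (\<lambda>w. b w - ncmul (ll 0) c w) \<in> FF" by (rule ideal_proj[OF fA fh])
      then show "proj 0 b \<in> FF" unfolding proj_diff proj_hom1_mul[OF ll_hom] by simp
    qed
  next
    case (Suc d)
    show ?case
    proof (intro allI impI)
      fix b assume b: "b \<in> free_alg n" "ncmul (yy 0) b \<in> FF"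
      obtain c where c: "c \<in> free_alg n" "\<forall>j. (\<lambda>w. dd n D j (ncmul (yy 0) b) w - ncmul (ll j) c w) \<in> FF"
        using ideal_dd'[OF b(2)] by blast
      have "(\<lambda>w. b w - ncmul (ll 0) c w) \<in> FF" using c(2)[rule_format, of 0] m(1) dd_y[of 0 0 b] by simp
      then have 1: "proj (Suc d) (\<lambda>w. b w - ncmul (ll 0) c w) \<in> FF" by (rule ideal_proj[OF fA fh])
      have "(\<lambda>w. 0 - ncmul (yy 0) c w) \<in> FF" using c(2)[rule_format, of m] m dd_y[of m 0 b] by simp
      then have "(\<lambda>w. - (0 - ncmul (yy 0) c w)) \<in> FF" by (rule ideal_neg)
      then have "ncmul (yy 0) c \<in> FF" by simp
      then have "proj d c \<in> FF" using Suc.IH c(1) by blast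
      then have 2: "ncmul (ll 0) (proj d c) \<in> FF" by (intro ideal_lmul ll_free)
      have "(\<lambda>w. proj (Suc d) (\<lambda>w. b w - ncmul (ll 0) c w) w + ncmul (ll 0) (proj d c) w) \<in> FF"
        by (rule ideal_add[OF 1 2])
      then show "proj (Suc d) b \<in> FF" unfolding proj_diff proj_hom1_mul[OF ll_hom] by simp
    qed
  qed
  then show "b \<in> free_alg n \<Longrightarrow> ncmul (yy 0) b \<in> FF \<Longrightarrow> b \<in> FF"
    using ideal_of_projs[OF fA fh] by blast
qed


lemma S_sub_P0_aux:
  assumes "k < n" "a \<in> free_alg n" "ncmul (yy k) a \<in> right_ideal_pre n f yy k"
  obtains h c where "h \<in> FF" "c \<in> free_alg n" "a = dd n D k h"
     "\<And>j. j < n \<Longrightarrow> k < j \<Longrightarrow> dd n D j h = (\<lambda>w. 0)"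
     "\<And>j. (\<lambda>w. dd n D j h w - ncmul (ll j) c w) \<in> FF"
proof -
  obtain g h where gh: "\<forall>i<k. g i \<in> free_alg n" "h \<in> FF"
    "ncmul (yy k) a = (\<lambda>w. (\<Sum>i<k. ncmul (yy i) (g i) w) + h w)"
    using assms(3) by (rule rip_memE)
  obtain c where c: "c \<in> free_alg n" "\<forall>j. (\<lambda>w. dd n D j h w - ncmul (ll j) c w) \<in> FF"
    using ideal_dd'[OF gh(2)] by blast
  have eq: "dd n D j (ncmul (yy k) a) = (\<lambda>w. dd n D j (\<lambda>w. \<Sum>i<k. ncmul (yy i) (g i) w) w + dd n D j h w)" for j
    unfolding gh(3) dd_add ..
  have "a = dd n D k h" using eq[of k] assms(1) dd_y[of k k a] dd_ysum[of k k g] by simp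
  moreover have "dd n D j h = (\<lambda>w. 0)" if "j < n" "k < j" for j
    using eq[of j] that assms(1) dd_y[of j k a] dd_ysum[of j k g] by simp
  ultimately show ?thesis using that gh(2) c by blast
qed

theorem main_case:
  assumes n2: "n - 1 \<noteq> 0" and lm: "ll (n - 1) = yy 0"
    and fdec: "f = (\<lambda>w. \<Sum>j<n. ncmul (yy j) (ll j) w)"
  shows "initially_koszul_wrt n f yy"
  unfolding initially_koszul_wrt_def
proof (intro allI impI)
  fix k assume k: "k < n"
  have n1: "n - 1 < n" using n2 by simp
  show "\<exists>j\<le>n. {a \<in> free_alg n. ncmul (yy k) a \<in> right_ideal_pre n f yy k} = right_ideal_pre n f yy j"
  proof (cases "k = n - 1")
    case False
    then have kn: "k < n - 1" using k by simp
    have "{a \<in> free_alg n. ncmul (yy k) a \<in> right_ideal_pre n f yy k} = right_ideal_pre n f yy 0"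
    proof (intro equalityI subsetI)
      fix a assume "a \<in> {a \<in> free_alg n. ncmul (yy k) a \<in> right_ideal_pre n f yy k}"
      then have a: "a \<in> free_alg n" "ncmul (yy k) a \<in> right_ideal_pre n f yy k" by auto
      obtain h c where hc: "h \<in> FF" "c \<in> free_alg n" "a = dd n D k h"
        "\<And>j. j < n \<Longrightarrow> k < j \<Longrightarrow> dd n D j h = (\<lambda>w. 0)"
        "\<And>j. (\<lambda>w. dd n D j h w - ncmul (ll j) c w) \<in> FF"
        using S_sub_P0_aux[OF k a] by blast
      have "(\<lambda>w. 0 - ncmul (yy 0) c w) \<in> FF" using hc(5)[of "n-1"] hc(4)[OF n1 kn] lm by simp
      then have "(\<lambda>w. - (0 - ncmul (yy 0) c w)) \<in> FF" by (rule ideal_neg)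
      then have "ncmul (yy 0) c \<in> FF" by simp
      then have "c \<in> FF" using regular[OF n1 n2 lm] hc(2) by blast
      then have "ncmul (ll k) c \<in> FF" by (intro ideal_lmul ll_free)
      from ideal_add[OF hc(5)[of k] this] have "a \<in> FF" using hc(3) by simp
      then show "a \<in> right_ideal_pre n f yy 0" using rip0 by blast
    next
      fix a assume "a \<in> right_ideal_pre n f yy 0"
      then have a: "a \<in> FF" using rip0 by blast
      have "ncmul (yy k) a \<in> right_ideal_pre n f yy k"
        by (rule rip_memI[where g="\<lambda>i w. 0"]) (auto intro: ideal_lmul yvec_free a)
      then show "a \<in> {a \<in> free_alg n. ncmul (yy k) a \<in> right_ideal_pre n f yy k}"
        using ideal_sub_free[OF fA a] by blast
    qed
    then show ?thesis by blast
  next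
    case True
    have "{a \<in> free_alg n. ncmul (yy k) a \<in> right_ideal_pre n f yy k} = right_ideal_pre n f yy 1"
    proof (intro equalityI subsetI)
      fix a assume "a \<in> {a \<in> free_alg n. ncmul (yy k) a \<in> right_ideal_pre n f yy k}"
      then have a: "a \<in> free_alg n" "ncmul (yy k) a \<in> right_ideal_pre n f yy k" by auto
      obtain h c where hc: "h \<in> FF" "c \<in> free_alg n" "a = dd n D k h"
        "\<And>j. (\<lambda>w. dd n D j h w - ncmul (ll j) c w) \<in> FF"
        using S_sub_P0_aux[OF k a] by blast
      have 1: "(\<lambda>w. a w - ncmul (yy 0) c w) \<in> FF" using hc(4)[of k] hc(3) lm True by simp
      show "a \<in> right_ideal_pre n f yy 1"
        by (rule rip_memI[OF _ 1, where g="\<lambda>i. c"]) (use hc(2) in auto)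
    next
      fix a assume "a \<in> right_ideal_pre n f yy 1"
      then obtain g h where gh: "\<forall>i<1. g i \<in> free_alg n" "h \<in> FF"
        "a = (\<lambda>w. (\<Sum>i<1. ncmul (yy i) (g i) w) + h w)" by (rule rip_memE)
      have a: "a = (\<lambda>w. ncmul (yy 0) (g 0) w + h w)" using gh(3) by simp
      have g0: "g 0 \<in> free_alg n" using gh(1) by simp
      have aA: "a \<in> free_alg n" unfolding a
        by (intro free_alg_add free_alg_ncmul yvec_free g0 ideal_sub_free[OF fA gh(2)])
      have fg: "ncmul f (g 0) = (\<lambda>w. (\<Sum>j<n-1. ncmul (yy j) (ncmul (ll j) (g 0)) w) + ncmul (yy (n-1)) (ncmul (yy 0) (g 0)) w)"
      proof -
        have "ncmul f (g 0) = (\<lambda>w. \<Sum>j<n. ncmul (yy j) (ncmul (ll j) (g 0)) w)"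
          by (subst fdec) (simp add: ncmul_sum_left ncmul_assoc)
        also have "\<dots> = (\<lambda>w. (\<Sum>j<n-1. ncmul (yy j) (ncmul (ll j) (g 0)) w) + ncmul (yy (n-1)) (ncmul (ll (n-1)) (g 0)) w)"
        proof -
          have nS: "{..<n} = insert (n-1) {..<n-1}" using n1 by auto
          show ?thesis unfolding nS by (auto simp: add.commute intro!: ext)
        qed
        finally show ?thesis using lm by simp
      qed
      have e1: "ncmul (yy k) a = (\<lambda>w. ncmul (yy k) (ncmul (yy 0) (g 0)) w + ncmul (yy k) h w)"
        unfolding a ncmul_add_right ..
      have "ncmul (yy k) a = (\<lambda>w. (\<Sum>i<k. ncmul (yy i) ((\<lambda>i w. - ncmul (ll i) (g 0) w) i) w) + (\<lambda>w. ncmul f (g 0) w + ncmul (yy k) h w) w)"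
        unfolding e1 by (rule ext) (simp add: fg ncmul_neg_right sum_negf True)
      moreover have "(\<lambda>w. ncmul f (g 0) w + ncmul (yy k) h w) \<in> FF"
        by (intro ideal_add ideal_rmul ideal_lmul g0 yvec_free gh(2) ideal_gen)
      ultimately have "ncmul (yy k) a \<in> right_ideal_pre n f yy k"
        by (intro rip_memI[where g="\<lambda>i w. - ncmul (ll i) (g 0) w"]) (auto intro!: free_alg_neg free_alg_ncmul ll_free g0)
      then show "a \<in> {a \<in> free_alg n. ncmul (yy k) a \<in> right_ideal_pre n f yy k}" using aA by blast
    qed
    then show ?thesis using k by (intro exI[of _ 1]) auto
  qed
qed


lemma P0_sub_S:
  assumes "a \<in> FF"
  shows "a \<in> {a \<in> free_alg n. ncmul (yy k) a \<in> right_ideal_pre n f yy k}"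
proof -
  have "ncmul (yy k) a \<in> right_ideal_pre n f yy k"
    by (rule rip_memI[where g="\<lambda>i w. 0"]) (auto intro: ideal_lmul yvec_free assms)
  then show ?thesis using ideal_sub_free[OF fA assms] by blast
qed

theorem rank1_case:
  assumes c: "c \<noteq> 0" and n0: "0 < n" and fdec: "f = (\<lambda>w. c * ncmul (yy 0) (yy 0) w)"
  shows "initially_koszul_wrt n f yy"
  unfolding initially_koszul_wrt_def
proof (intro allI impI)
  fix k assume k: "k < n"
  have llj: "ll j = (if j = 0 then (\<lambda>w. c * yy 0 w) else (\<lambda>w. 0))" if "j < n" for j
  proof -
    have "ll j = dd n D j (\<lambda>w. c * ncmul (yy 0) (yy 0) w)" using fdec by simp
    also have "\<dots> = (\<lambda>w. c * dd n D j (ncmul (yy 0) (yy 0)) w)" by (rule dd_smul)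
    finally show ?thesis using dd_y[OF that n0, of "yy 0"] by auto
  qed
  show "\<exists>j\<le>n. {a \<in> free_alg n. ncmul (yy k) a \<in> right_ideal_pre n f yy k} = right_ideal_pre n f yy j"
  proof (cases "k = 0")
    case False
    have "{a \<in> free_alg n. ncmul (yy k) a \<in> right_ideal_pre n f yy k} = right_ideal_pre n f yy 0"
    proof (intro equalityI subsetI)
      fix a assume "a \<in> {a \<in> free_alg n. ncmul (yy k) a \<in> right_ideal_pre n f yy k}"
      then have a: "a \<in> free_alg n" "ncmul (yy k) a \<in> right_ideal_pre n f yy k" by auto
      obtain h c' where hc: "h \<in> FF" "c' \<in> free_alg n" "a = dd n D k h"
        "\<And>j. (\<lambda>w. dd n D j h w - ncmul (ll j) c' w) \<in> FF"
        using S_sub_P0_aux[OF k a] by blast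
      have "a \<in> FF" using hc(4)[of k] hc(3) llj[OF k] False by simp
      then show "a \<in> right_ideal_pre n f yy 0" using rip0 by blast
    next
      fix a assume "a \<in> right_ideal_pre n f yy 0"
      then show "a \<in> {a \<in> free_alg n. ncmul (yy k) a \<in> right_ideal_pre n f yy k}"
        using rip0 P0_sub_S by blast
    qed
    then show ?thesis by blast
  next
    case True
    have "{a \<in> free_alg n. ncmul (yy k) a \<in> right_ideal_pre n f yy k} = right_ideal_pre n f yy 1"
    proof (intro equalityI subsetI)
      fix a assume "a \<in> {a \<in> free_alg n. ncmul (yy k) a \<in> right_ideal_pre n f yy k}"
      then have a: "a \<in> free_alg n" "ncmul (yy k) a \<in> right_ideal_pre n f yy k" by auto
      obtain h c' where hc: "h \<in> FF" "c' \<in> free_alg n" "a = dd n D k h"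
        "\<And>j. (\<lambda>w. dd n D j h w - ncmul (ll j) c' w) \<in> FF"
        using S_sub_P0_aux[OF k a] by blast
      have 1: "(\<lambda>w. a w - ncmul (yy 0) (\<lambda>w. c * c' w) w) \<in> FF"
        using hc(4)[of k] hc(3) llj[OF k] True by (simp add: ncmul_smul_left ncmul_smul_right)
      show "a \<in> right_ideal_pre n f yy 1"
        by (rule rip_memI[OF _ 1, where g="\<lambda>i w. c * c' w"]) (use hc(2) in \<open>auto intro: free_alg_smul\<close>)
    next
      fix a assume "a \<in> right_ideal_pre n f yy 1"
      then obtain g h where gh: "\<forall>i<1. g i \<in> free_alg n" "h \<in> FF"
        "a = (\<lambda>w. (\<Sum>i<1. ncmul (yy i) (g i) w) + h w)" by (rule rip_memE)
      have a: "a = (\<lambda>w. ncmul (yy 0) (g 0) w + h w)" using gh(3) by simp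
      have g0: "g 0 \<in> free_alg n" using gh(1) by simp
      have aA: "a \<in> free_alg n" unfolding a
        by (intro free_alg_add free_alg_ncmul yvec_free g0 ideal_sub_free[OF fA gh(2)])
      have e1: "ncmul (yy 0) a = (\<lambda>w. ncmul (ncmul (yy 0) (yy 0)) (g 0) w + ncmul (yy 0) h w)"
        unfolding a ncmul_add_right by (simp add: ncmul_assoc)
      have "ncmul (ncmul (yy 0) (yy 0)) (g 0) = (\<lambda>w. inverse c * ncmul f (g 0) w)"
        unfolding fdec ncmul_smul_left
      proof (rule ext)
        fix w
        have "inverse c * (c * ncmul (ncmul (yy 0) (yy 0)) (g 0) w) = (inverse c * c) * ncmul (ncmul (yy 0) (yy 0)) (g 0) w"
          by (rule mult.assoc[symmetric])
        then show "ncmul (ncmul (yy 0) (yy 0)) (g 0) w = inverse c * (c * ncmul (ncmul (yy 0) (yy 0)) (g 0) w)"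
          using c by simp
      qed
      then have "ncmul (yy 0) a = (\<lambda>w. inverse c * ncmul f (g 0) w + ncmul (yy 0) h w)"
        unfolding e1 by simp
      also have "\<dots> \<in> FF"
        by (intro ideal_add ideal_smul ideal_rmul ideal_lmul g0 yvec_free gh(2) ideal_gen)
      finally have "ncmul (yy 0) a \<in> right_ideal_pre n f yy 0" using rip0 by blast
      then show "a \<in> {a \<in> free_alg n. ncmul (yy k) a \<in> right_ideal_pre n f yy k}" using aA True by blast
    qed
    then show ?thesis using k by (intro exI[of _ 1]) auto
  qed
qed

lemma basis_ok: "degree_one_basis n yy"
  unfolding degree_one_basis_def
proof (intro conjI allI impI)
  fix i assume "i < n"
  show "yy i \<in> free_alg n" by (rule yvec_free)
  show "homogeneous 1 (yy i)" by (rule yvec_hom)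
next
  fix cc :: "nat \<Rightarrow> 'k" and i
  assume h: "\<forall>w. (\<Sum>i<n. cc i * yy i w) = 0" and i: "i < n"
  have "cc i = (\<Sum>k<n. if i = k then cc k else 0)" using i by simp
  also have "\<dots> = (\<Sum>k<n. cc k * (if i = k then 1 else 0))" by (intro sum.cong) auto
  also have "\<dots> = (\<Sum>k<n. cc k * (\<Sum>a<n. D i a * Y a k))" using DY i by simp
  also have "\<dots> = (\<Sum>k<n. \<Sum>a<n. cc k * (D i a * Y a k))" by (simp add: sum_distrib_left)
  also have "\<dots> = (\<Sum>a<n. \<Sum>k<n. cc k * (D i a * Y a k))" by (rule sum.swap)
  also have "\<dots> = (\<Sum>a<n. D i a * (\<Sum>k<n. cc k * yy k [a]))"
    by (intro sum.cong refl) (simp add: yvec_def sum_distrib_left mult.left_commute)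
  also have "\<dots> = 0" using h by simp
  finally show "cc i = 0" .
qed

end



lemma inv_swap:
  fixes D Y :: "nat \<Rightarrow> nat \<Rightarrow> 'k::field"
  assumes "\<forall>j<n. \<forall>k<n. (\<Sum>i<n. D j i * Y i k) = (if j = k then 1 else 0)"
  shows "\<forall>a<n. \<forall>b<n. (\<Sum>j<n. Y a j * D j b) = (if a = b then 1 else 0)"
proof -
  define A where "A = mat n n (\<lambda>(i,j). D i j)"
  define B where "B = mat n n (\<lambda>(i,j). Y i j)"
  have A: "A \<in> carrier_mat n n" and B: "B \<in> carrier_mat n n" unfolding A_def B_def by auto
  have "A * B = 1\<^sub>m n"
    by (rule eq_matI) (use assms in \<open>auto simp: A_def B_def scalar_prod_def atLeast0LessThan\<close>)
  then have BA: "B * A = 1\<^sub>m n" by (rule mat_mult_left_right_inverse[OF A B])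
  show ?thesis
  proof (intro allI impI)
    fix a b assume ab: "a < n" "b < n"
    have "(B * A) $$ (a, b) = (\<Sum>j<n. Y a j * D j b)"
      using ab by (auto simp: A_def B_def scalar_prod_def atLeast0LessThan)
    then show "(\<Sum>j<n. Y a j * D j b) = (if a = b then 1 else 0)" using BA ab by simp
  qed
qed


definition del :: "nat \<Rightarrow> nat \<Rightarrow> 'k::field" where
  "del a x = (if a = x then 1 else 0)"

lemma del_same[simp]: "del x x = 1" by (simp add: del_def)
lemma del_diff[simp]: "a \<noteq> x \<Longrightarrow> del a x = 0" by (simp add: del_def)

lemma sum_del[simp]: "(\<Sum>a<n. del a x * g a) = (if x < n then g x else 0)"
proof -
  have "(\<Sum>a<n. del a x * g a) = (\<Sum>a<n. if a = x then g a else 0)"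
    by (intro sum.cong) (auto simp: del_def)
  then show ?thesis by simp
qed

definition goodYD :: "nat \<Rightarrow> (nat \<Rightarrow> nat \<Rightarrow> 'k::field) \<Rightarrow> (nat \<Rightarrow> nat \<Rightarrow> 'k) \<Rightarrow> (nat \<Rightarrow> 'k) \<Rightarrow> (nat \<Rightarrow> 'k) \<Rightarrow> bool" where
  "goodYD n Y D p v \<longleftrightarrow> (\<forall>j<n. \<forall>k<n. (\<Sum>i<n. D j i * Y i k) = (if j = k then 1 else 0))
      \<and> (\<forall>a<n. Y a 0 = v a) \<and> (\<forall>a<n. D (n - 1) a = p a)"

lemma base_construction:
  fixes p v :: "nat \<Rightarrow> 'k::field"
  assumes n: "2 \<le> n" and pN: "p (n - 1) \<noteq> 0" and v0: "v 0 \<noteq> 0" and pv: "(\<Sum>a<n. p a * v a) = 0"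
  shows "\<exists>Y D. goodYD n Y D p v"
proof -
  define N where "N = n - 1"
  have N: "N < n" "N \<noteq> 0" using n by (auto simp: N_def)
  define Y where "Y a k = (if k = 0 then v a else if k = N then del a N * inverse (p N)
      else del a k - del a N * (p k * inverse (p N)))" for a k
  define D where "D j a = (if j = 0 then del a 0 * inverse (v 0) else if j = N then p a
      else del a j - del a 0 * (v j * inverse (v 0)))" for j a
  have pN': "p N \<noteq> 0" using pN by (simp add: N_def)
  have Y0: "Y 0 k = (if k = 0 then v 0 else 0)" if "k < n" for k
    using N by (auto simp: Y_def)
  have YN: "Y N k = (if k = 0 then v N else if k = N then inverse (p N) else - (p k * inverse (p N)))" for k
    using N by (auto simp: Y_def)
  have Yj: "Y j k = (if k = 0 then v j else if k = j then 1 else 0)" if "j \<noteq> 0" "j \<noteq> N" for j k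
    using that by (auto simp: Y_def)
  have "(\<Sum>i<n. D j i * Y i k) = (if j = k then 1 else 0)" if jk: "j < n" "k < n" for j k
  proof -
    consider "j = 0" | "j = N" | "j \<noteq> 0" "j \<noteq> N" by blast
    then show ?thesis
    proof cases
      case 1
      have "(\<Sum>i<n. D j i * Y i k) = (\<Sum>i<n. del i 0 * (inverse (v 0) * Y i k))"
        using 1 by (simp add: D_def mult.assoc)
      also have "\<dots> = inverse (v 0) * Y 0 k" using n by simp
      finally show ?thesis using 1 Y0[OF jk(2)] v0 by simp
    next
      case 2
      have "(\<Sum>i<n. D j i * Y i k) = (\<Sum>i<n. p i * Y i k)"
        using 2 N by (simp add: D_def)
      also have "\<dots> = (if j = k then 1 else 0)"
      proof (cases "k = 0")
        case True then show ?thesis using pv 2 N by (simp add: Y_def)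
      next
        case False
        show ?thesis
        proof (cases "k = N")
          case True
          have "(\<Sum>i<n. p i * Y i k) = (\<Sum>i<n. del i N * (inverse (p N) * p i))"
            using True N by (simp add: Y_def mult.commute mult.left_commute)
          also have "\<dots> = 1" using N pN' by simp
          finally show ?thesis using True 2 by simp
        next
          case kN: False
          have "(\<Sum>i<n. p i * Y i k) = (\<Sum>i<n. del i k * p i - del i N * (p k * inverse (p N) * p i))"
            using kN False by (simp add: Y_def algebra_simps)
          also have "\<dots> = p k - p k * inverse (p N) * p N" using N jk by (simp add: sum_subtractf)
          also have "\<dots> = 0" using pN' by simp
          finally show ?thesis using kN 2 by simp
        qed
      qed
      finally show ?thesis .
    next
      case 3
      have "(\<Sum>i<n. D j i * Y i k) = (\<Sum>i<n. del i j * Y i k - del i 0 * (v j * inverse (v 0) * Y i k))"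
        using 3 by (simp add: D_def algebra_simps)
      also have "\<dots> = Y j k - v j * inverse (v 0) * Y 0 k" using jk n by (simp add: sum_subtractf)
      also have "\<dots> = (if j = k then 1 else 0)"
        using 3 Y0[OF jk(2)] Yj[OF 3] v0 by auto
      finally show ?thesis .
    qed
  qed
  moreover have "\<forall>a<n. Y a 0 = v a" by (simp add: Y_def)
  moreover have "\<forall>a<n. D (n - 1) a = p a" using N by (simp add: D_def N_def)
  ultimately show ?thesis unfolding goodYD_def by blast
qed


lemma sum_invol:
  assumes "\<forall>x<n. \<tau> x < n \<and> \<tau> (\<tau> x) = x"
  shows "(\<Sum>i<n. g (\<tau> i)) = (\<Sum>i<n. g i :: 'a::comm_monoid_add)"
  by (rule sum.reindex_bij_witness[of _ \<tau> \<tau>]) (use assms in auto)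

lemma good_perm:
  assumes t: "\<forall>x<n. \<tau> x < n \<and> \<tau> (\<tau> x) = x"
    and g: "goodYD n Y D (\<lambda>a. p (\<tau> a)) (\<lambda>a. v (\<tau> a))"
  shows "goodYD n (\<lambda>a k. Y (\<tau> a) k) (\<lambda>j a. D j (\<tau> a)) p v"
  unfolding goodYD_def
proof (intro conjI allI impI)
  fix j k assume "j < n" "k < n"
  then show "(\<Sum>i<n. D j (\<tau> i) * Y (\<tau> i) k) = (if j = k then 1 else 0)"
    using sum_invol[OF t, of "\<lambda>i. D j i * Y i k"] g unfolding goodYD_def by simp
next
  fix a assume "a < n" then show "Y (\<tau> a) 0 = v a" using g t unfolding goodYD_def by auto
next
  fix a assume "a < n" then show "D (n - 1) (\<tau> a) = p a" using g t unfolding goodYD_def by auto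
qed

definition tr :: "nat \<Rightarrow> nat \<Rightarrow> nat \<Rightarrow> nat" where
  "tr x y z = (if z = x then y else if z = y then x else z)"

lemma tr_invol: "x < n \<Longrightarrow> y < n \<Longrightarrow> \<forall>z<n. tr x y z < n \<and> tr x y (tr x y z) = z"
  by (auto simp: tr_def)

lemma construction:
  fixes p v :: "nat \<Rightarrow> 'k::field"
  assumes r: "r < n" "p r \<noteq> 0" and s: "s < n" "v s \<noteq> 0" and rs: "r \<noteq> s"
    and pv: "(\<Sum>a<n. p a * v a) = 0"
  shows "\<exists>Y D. goodYD n Y D p v"
proof -
  have n: "2 \<le> n" using r s rs by linarith
  define t1 where "t1 = tr r (n - 1)"
  define s' where "s' = t1 s"
  define t2 where "t2 = tr 0 s'"
  have T1: "\<forall>z<n. t1 z < n \<and> t1 (t1 z) = z" unfolding t1_def using r by (intro tr_invol) auto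
  have s'n: "s' < n" using T1 s unfolding s'_def by auto
  have T2: "\<forall>z<n. t2 z < n \<and> t2 (t2 z) = z" unfolding t2_def using s'n n by (intro tr_invol) auto
  have s'N: "s' \<noteq> n - 1" using rs unfolding s'_def t1_def tr_def by auto
  have "t2 (n - 1) = n - 1" using s'N n unfolding t2_def tr_def by auto
  then have e1: "t1 (t2 (n - 1)) = r" unfolding t1_def tr_def by auto
  have e2: "t1 (t2 0) = s" unfolding t2_def tr_def s'_def using T1 s by auto
  have "(\<Sum>a<n. p (t1 (t2 a)) * v (t1 (t2 a))) = 0"
    using pv sum_invol[OF T1, of "\<lambda>a. p a * v a"] sum_invol[OF T2, of "\<lambda>a. p (t1 a) * v (t1 a)"] by simp
  then obtain Y D where "goodYD n Y D (\<lambda>a. p (t1 (t2 a))) (\<lambda>a. v (t1 (t2 a)))"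
    using base_construction[OF n, of "\<lambda>a. p (t1 (t2 a))" "\<lambda>a. v (t1 (t2 a))"] e1 e2 r s by auto
  from good_perm[OF T2, of Y D "\<lambda>a. p (t1 a)" "\<lambda>a. v (t1 a)", OF this]
  have "goodYD n (\<lambda>a k. Y (t2 a) k) (\<lambda>j a. D j (t2 a)) (\<lambda>a. p (t1 a)) (\<lambda>a. v (t1 a))" .
  from good_perm[OF T1 this] show ?thesis by blast
qed


lemma quad_root:
  fixes c0 c1 c2 :: "'k::alg_closed_field"
  assumes "c2 \<noteq> 0"
  shows "\<exists>t. c0 + c1 * t + c2 * t * t = 0"
proof -
  define g where "g i = (if i = 0 then c0 else if i = 1 then c1 else c2)" for i :: nat
  obtain t where "(\<Sum>k\<le>2. g k * t ^ k) = 0"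
    using alg_closed[of 2 g] assms by (auto simp: g_def)
  then have "c0 + c1 * t + c2 * t * t = 0"
    by (simp add: g_def numeral_2_eq_2 power2_eq_square mult.assoc)
  then show ?thesis by blast
qed

lemma dichotomy:
  fixes C :: "nat \<Rightarrow> nat \<Rightarrow> 'k::alg_closed_field"
  assumes a0: "a0 < n" "b0 < n" "C a0 b0 \<noteq> 0"
  shows "(\<exists>p. (\<exists>b<n. (\<Sum>a<n. p a * C a b) \<noteq> 0) \<and> (\<Sum>b<n. p b * (\<Sum>a<n. p a * C a b)) = 0)
    \<or> (\<exists>l a. a < n \<and> l a \<noteq> 0 \<and> (\<forall>b<n. \<forall>c<n. C b c = inverse (l a) * l b * l c))"
proof (rule disjCI)
  assume "\<not> (\<exists>l a. a < n \<and> l a \<noteq> 0 \<and> (\<forall>b<n. \<forall>c<n. C b c = inverse (l a) * l b * l c))"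
  then have nr: "\<And>l a. a < n \<Longrightarrow> l a \<noteq> 0 \<Longrightarrow> \<exists>b<n. \<exists>c<n. C b c \<noteq> inverse (l a) * l b * l c" by blast
  show "\<exists>p. (\<exists>b<n. (\<Sum>a<n. p a * C a b) \<noteq> 0) \<and> (\<Sum>b<n. p b * (\<Sum>a<n. p a * C a b)) = 0"
  proof (rule ccontr)
    assume "\<not> ?thesis"
    then have H: "\<And>p. (\<Sum>b<n. p b * (\<Sum>a<n. p a * C a b)) = 0 \<Longrightarrow> \<forall>b<n. (\<Sum>a<n. p a * C a b) = 0" by blast
    have V2: "(\<Sum>x<n. (del x b + del x a * t) * C x c) = C b c + t * C a c" if "a < n" "b < n" for a b t c
      using that by (simp add: distrib_right sum.distrib mult.assoc)
    have V2': "(\<Sum>x<n. (del x b + del x a * t) * g x) = g b + t * g a" if "a < n" "b < n" for a b t g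
      using that by (simp add: distrib_right sum.distrib mult.assoc)
    obtain a where a: "a < n" "C a a \<noteq> 0"
    proof (rule ccontr)
      assume "\<not> thesis"
      then have z: "\<And>a. a < n \<Longrightarrow> C a a = 0" using that by blast
      have "\<forall>b<n. (\<Sum>x<n. (del x a0 + del x a0 * 0) * C x b) = 0"
        by (rule H) (use V2'[OF a0(1) a0(1)] V2[OF a0(1) a0(1)] z[OF a0(1)] in simp)
      then show False using V2[OF a0(1) a0(1), of 0 b0] a0 by simp
    qed
    have "\<exists>t. \<forall>c<n. C b c + t * C a c = 0" if b: "b < n" for b
    proof -
      obtain t where t: "C b b + (C a b + C b a) * t + C a a * t * t = 0"
        using quad_root[OF a(2)] by blast
      have "\<forall>c<n. (\<Sum>x<n. (del x b + del x a * t) * C x c) = 0"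
      proof (rule H)
        show "(\<Sum>c<n. (del c b + del c a * t) * (\<Sum>x<n. (del x b + del x a * t) * C x c)) = 0"
          unfolding V2[OF a(1) b] V2'[OF a(1) b] using t by (simp add: algebra_simps)
      qed
      then show ?thesis using V2[OF a(1) b] by auto
    qed
    then obtain T where T: "\<And>b c. b < n \<Longrightarrow> c < n \<Longrightarrow> C b c + T b * C a c = 0" by metis
    define l where "l c = C a c" for c
    have Cbc: "C b c = - T b * l c" if "b < n" "c < n" for b c
      using T[OF that] unfolding l_def by (simp add: eq_neg_iff_add_eq_0 add.commute)
    have la: "l a \<noteq> 0" using a by (simp add: l_def)
    have "C b c = inverse (l a) * l b * l c" if bc: "b < n" "c < n" for b c
    proof -
      define \<kappa> where "\<kappa> = - T b - l b * inverse (l a)"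
      have Vp: "(\<Sum>x<n. (del x b + del x a * (- (l b * inverse (l a)))) * C x c') = \<kappa> * l c'" if "c' < n" for c'
        unfolding V2[OF a(1) bc(1)] using Cbc[OF bc(1) that] unfolding \<kappa>_def l_def by (simp add: algebra_simps)
      have "\<forall>c<n. (\<Sum>x<n. (del x b + del x a * (- (l b * inverse (l a)))) * C x c) = 0"
      proof (rule H)
        have "(\<Sum>c<n. (del c b + del c a * (- (l b * inverse (l a)))) * (\<Sum>x<n. (del x b + del x a * (- (l b * inverse (l a)))) * C x c))
          = (\<Sum>c<n. (del c b + del c a * (- (l b * inverse (l a)))) * (\<kappa> * l c))"
          using Vp by (intro sum.cong) auto
        also have "\<dots> = \<kappa> * l b + (- (l b * inverse (l a))) * (\<kappa> * l a)"
          by (rule V2'[OF a(1) bc(1)])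
        also have "\<dots> = 0" using la by (simp add: field_simps)
        finally show "(\<Sum>c<n. (del c b + del c a * (- (l b * inverse (l a)))) * (\<Sum>x<n. (del x b + del x a * (- (l b * inverse (l a)))) * C x c)) = 0" .
      qed
      then have "\<kappa> * l a = 0" using Vp[OF a(1)] a(1) by simp
      then have "\<kappa> = 0" using la by simp
      then have "- T b = l b * inverse (l a)" unfolding \<kappa>_def by simp
      then show ?thesis using Cbc[OF bc] by (simp add: mult.commute mult.left_commute)
    qed
    then show False using nr[of a l] a(1) la by blast
  qed
qed


lemma f_nz_word:
  fixes f :: "('k::field) ncpoly"
  assumes "f \<in> free_alg n" "homogeneous 2 f" "f w \<noteq> 0"
  shows "\<exists>x b. w = [x, b] \<and> x < n \<and> b < n"
proof -
  have "length w = 2" using assms unfolding homogeneous_def by blast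
  moreover have "set w \<subseteq> {..<n}" using free_alg_set[OF assms(1) assms(3)] .
  ultimately show ?thesis
    by (cases w; cases "tl w"; cases "tl (tl w)") auto
qed

theorem mainTheorem8:
  fixes f :: "('k::alg_closed_field) ncpoly" and n :: nat
  assumes "f \<in> free_alg n" and "f \<noteq> (\<lambda>w. 0)" and "homogeneous 2 f"
  shows "initially_koszul n f"
proof -
  note fA = assms(1) and fh = assms(3)
  define C where "C a b = f [a, b]" for a b
  have fz: "f w = 0" if "\<not> (\<exists>x b. w = [x, b] \<and> x < n \<and> b < n)" for w
    using f_nz_word[OF fA fh] that by blast
  obtain w0 where "f w0 \<noteq> 0" using assms(2) by auto
  then obtain a0 b0 where ab0: "a0 < n" "b0 < n" "C a0 b0 \<noteq> 0"
    using f_nz_word[OF fA fh] unfolding C_def by blast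
  have f0: "f [] = 0" by (rule hom2_Nil[OF fh])
  from dichotomy[where C=C, OF ab0]
  show ?thesis
  proof
    assume "\<exists>p. (\<exists>b<n. (\<Sum>a<n. p a * C a b) \<noteq> 0) \<and> (\<Sum>b<n. p b * (\<Sum>a<n. p a * C a b)) = 0"
    then obtain p s where s: "s < n" "(\<Sum>a<n. p a * C a s) \<noteq> 0"
      and Q: "(\<Sum>b<n. p b * (\<Sum>a<n. p a * C a b)) = 0" by blast
    define V where "V b = (\<Sum>a<n. p a * C a b)" for b
    obtain r where r: "r < n" "p r \<noteq> 0"
    proof (rule ccontr)
      assume "\<not> thesis"
      then have "\<forall>a<n. p a = 0" using that by blast
      then show False using s by simp
    qed
    obtain s' where s': "s' < n" "V s' \<noteq> 0" "s' \<noteq> r"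
    proof (rule ccontr)
      assume "\<not> thesis"
      then have z: "\<And>b. b < n \<Longrightarrow> b \<noteq> r \<Longrightarrow> V b = 0" using that by blast
      have "(\<Sum>b<n. p b * V b) = (\<Sum>b<n. if b = r then p r * V r else 0)"
        using z by (intro sum.cong) auto
      then have "p r * V r = 0" using Q r(1) unfolding V_def by simp
      then have "V r = 0" using r by simp
      then have "V s = 0" using z[OF s(1)] by (cases "s = r") auto
      then show False using s unfolding V_def by simp
    qed
    have pv: "(\<Sum>b<n. p b * V b) = 0" using Q unfolding V_def .
    obtain Y D where g: "goodYD n Y D p V"
      using construction[OF r s'(1) s'(2) _ pv] s'(3) by metis
    have DY: "\<forall>j<n. \<forall>k<n. (\<Sum>i<n. D j i * Y i k) = (if j = k then 1 else 0)"
      using g unfolding goodYD_def by blast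
    have YD: "\<forall>a<n. \<forall>b<n. (\<Sum>j<n. Y a j * D j b) = (if a = b then 1 else 0)"
      by (rule inv_swap[OF DY])
    have n2: "n - 1 \<noteq> 0" using r s' by linarith
    have lm: "dd n D (n - 1) f = yvec n Y 0"
    proof
      fix w
      show "dd n D (n - 1) f w = yvec n Y 0 w"
      proof (cases "\<exists>b. w = [b] \<and> b < n")
        case True
        then obtain b where b: "w = [b]" "b < n" by blast
        have "dd n D (n - 1) f w = V b"
          unfolding dd_def V_def C_def b using g unfolding goodYD_def by simp
        also have "\<dots> = yvec n Y 0 w" using g b unfolding goodYD_def yvec_def by simp
        finally show ?thesis .
      next
        case False
        then have "\<And>i. f (i # w) = 0" by (intro fz) auto
        moreover have "yvec n Y 0 w = 0" using False yvec_nz by blast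
        ultimately show ?thesis unfolding dd_def by simp
      qed
    qed
    have fdec: "f = (\<lambda>w. \<Sum>j<n. ncmul (yvec n Y j) (dd n D j f) w)"
    proof
      fix w
      show "f w = (\<Sum>j<n. ncmul (yvec n Y j) (dd n D j f) w)"
      proof (cases w)
        case Nil then show ?thesis using f0 by (simp add: ncmul_yvec_Nil)
      next
        case (Cons x w')
        show ?thesis
        proof (cases "x < n")
          case True
          have "(\<Sum>j<n. ncmul (yvec n Y j) (dd n D j f) w) = (\<Sum>j<n. \<Sum>i<n. Y x j * (D j i * f (i # w')))"
            unfolding Cons ncmul_yvec_Cons dd_def using True by (simp add: sum_distrib_left)
          also have "\<dots> = (\<Sum>i<n. \<Sum>j<n. Y x j * (D j i * f (i # w')))" by (rule sum.swap)
          also have "\<dots> = (\<Sum>i<n. (\<Sum>j<n. Y x j * D j i) * f (i # w'))"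
            by (simp add: sum_distrib_right mult.assoc)
          also have "\<dots> = (\<Sum>i<n. if i = x then f (i # w') else 0)"
            using YD True by (intro sum.cong) auto
          also have "\<dots> = f w" using True Cons by simp
          finally show ?thesis ..
        next
          case False
          then have "f w = 0" using Cons by (intro fz) auto
          then show ?thesis using False unfolding Cons ncmul_yvec_Cons by simp
        qed
      qed
    qed
    have "initially_koszul_wrt n f (yvec n Y)"
      by (rule main_case[OF fA fh DY n2 lm fdec])
    moreover have "degree_one_basis n (yvec n Y)" by (rule basis_ok[OF fA fh DY])
    ultimately show ?thesis unfolding initially_koszul_def by blast
  next
    assume "\<exists>l a. a < n \<and> l a \<noteq> 0 \<and> (\<forall>b<n. \<forall>c<n. C b c = inverse (l a) * l b * l c)"
    then obtain l a where la: "a < n" "l a \<noteq> 0" and Cl: "\<And>b c. b < n \<Longrightarrow> c < n \<Longrightarrow> C b c = inverse (l a) * l b * l c"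
      by blast
    obtain Y D where DY: "\<forall>j<n. \<forall>k<n. (\<Sum>i<n. D j i * Y i k) = (if j = k then 1 else 0)"
      and Y0: "\<forall>b<n. Y b 0 = l b"
    proof (cases "n = 1")
      case True
      then have a0: "a = 0" using la by simp
      show ?thesis
        by (rule that[of "\<lambda>j i. inverse (l 0)" "\<lambda>i k. l 0"]) (use True a0 la in auto)
    next
      case False
      define r where "r = (if a = 0 then 1 else 0 :: nat)"
      have r: "r < n" "r \<noteq> a" using False la by (auto simp: r_def)
      define p where "p x = del x r - del x a * (l r * inverse (l a))" for x
      have pr: "p r \<noteq> 0" using r by (simp add: p_def)
      have "(\<Sum>x<n. p x * l x) = (\<Sum>x<n. del x r * l x - del x a * (l r * inverse (l a) * l x))"
        unfolding p_def by (simp add: algebra_simps)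
      also have "\<dots> = l r - l r * inverse (l a) * l a" using r la by (simp add: sum_subtractf)
      also have "\<dots> = 0" using la by simp
      finally have pv: "(\<Sum>x<n. p x * l x) = 0" .
      obtain Y D where "goodYD n Y D p l"
        using construction[OF r(1) pr la(1) la(2) r(2) pv] by blast
      then show ?thesis using that unfolding goodYD_def by blast
    qed
    have YD: "\<forall>a<n. \<forall>b<n. (\<Sum>j<n. Y a j * D j b) = (if a = b then 1 else 0)"
      by (rule inv_swap[OF DY])
    have n0: "0 < n" using la by simp
    have fdec: "f = (\<lambda>w. inverse (l a) * ncmul (yvec n Y 0) (yvec n Y 0) w)"
    proof
      fix w
      show "f w = inverse (l a) * ncmul (yvec n Y 0) (yvec n Y 0) w"
      proof (cases "\<exists>x b. w = [x, b] \<and> x < n \<and> b < n")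
        case True
        then obtain x b where xb: "w = [x, b]" "x < n" "b < n" by blast
        have "ncmul (yvec n Y 0) (yvec n Y 0) w = Y x 0 * yvec n Y 0 [b]"
          unfolding xb(1) ncmul_yvec_Cons using xb by simp
        also have "\<dots> = l x * l b" using Y0 xb by (simp add: yvec_def)
        finally show ?thesis using Cl[OF xb(2,3)] xb unfolding C_def by (simp add: mult.assoc)
      next
        case False
        have "ncmul (yvec n Y 0) (yvec n Y 0) w = 0"
        proof (cases w)
          case Nil then show ?thesis by (simp add: ncmul_yvec_Nil)
        next
          case (Cons x w')
          have "(if x < n then Y x 0 else 0) * yvec n Y 0 w' = 0"
          proof (cases "x < n")
            case True
            then have "yvec n Y 0 w' = 0" using False Cons yvec_nz by blast
            then show ?thesis by simp
          qed simp
          then show ?thesis unfolding Cons ncmul_yvec_Cons .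
        qed
        then show ?thesis using fz[OF False] by simp
      qed
    qed
    have "initially_koszul_wrt n f (yvec n Y)"
      using rank1_case[OF fA fh DY _ n0 fdec] la by simp
    moreover have "degree_one_basis n (yvec n Y)" by (rule basis_ok[OF fA fh DY])
    ultimately show ?thesis unfolding initially_koszul_def by blast
  qed
qed

end
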